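(* Fix any ordering $e_1,\dots,e_n$ of $V$, and let $S_L$ be the set of elements selected by Algorithm 3 among the positions $i\le\beta n$. Suppose $f(S_L)\ge\alpha\,\mathrm{OPT}$ with $\alpha=3\cdot10^{-3}$, and $0.9\beta k\le|\mathcal O_L|\le1.1\beta k$, where $\mathcal O_L$ is the set of elements of $\mathcal O$ at positions $i\le\beta n$. Then the output $S$ of Algorithm 3 satisfies $f(S)\ge(0.5+9\cdot10^{-12})\mathrm{OPT}$.
   Context: $V$ is a finite ground set with $|V|=n$; $f:2^V\to\mathbb{R}_{\ge0}$ is monotone, submodular and normalized; $f(X\mid Y)=f(X\cup Y)-f(Y)$, $f(e\mid Y)=f(\{e\}\mid Y)$. $k\le n$ is a positive integer, $\mathrm{OPT}=\max\{f(S):S\subseteq V,|S|\le k\}$, and $\mathcal O$ is a fixed set with $|\mathcal O|=k$, $f(\mathcal O)=\mathrm{OPT}$. Algorithm 3 (knows $\mathrm{OPT}$), with $\beta=10^{-3}$, $\epsilon=10^{-8}$, $\delta=3\cdot10^{-11}$: start with $S=\emptyset$; for $i=1,\dots,n$, add $e_i$ to $S$ if $|S|<k$ and either ($i\le\beta n$ and $f(e_i\mid S)\ge\frac{1+\epsilon}{2}\cdot\frac{\mathrm{OPT}}{k}$) or ($i>\beta n$ and $f(e_i\mid S)\ge\frac{1-\delta}{2}\cdot\frac{\mathrm{OPT}}{k}$); return $S$. *)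

theory Defs
  imports Complex_Main
begin

definition marg :: "('a set \<Rightarrow> real) \<Rightarrow> 'a set \<Rightarrow> 'a set \<Rightarrow> real" where
  "marg f X Y = f (X \<union> Y) - f Y"

definition monotone_set_fun :: "'a set \<Rightarrow> ('a set \<Rightarrow> real) \<Rightarrow> bool" where
  "monotone_set_fun V f \<longleftrightarrow> (\<forall>A B. A \<subseteq> B \<and> B \<subseteq> V \<longrightarrow> f A \<le> f B)"

definition submodular_set_fun :: "'a set \<Rightarrow> ('a set \<Rightarrow> real) \<Rightarrow> bool" where
  "submodular_set_fun V f \<longleftrightarrow>
     (\<forall>A B. A \<subseteq> V \<and> B \<subseteq> V \<longrightarrow> f (A \<union> B) + f (A \<inter> B) \<le> f A + f B)"

definition OPT_val :: "'a set \<Rightarrow> ('a set \<Rightarrow> real) \<Rightarrow> nat \<Rightarrow> real" where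
  "OPT_val V f k = Max {f S | S. S \<subseteq> V \<and> card S \<le> k}"

definition alg_beta :: real where "alg_beta = 1 / 10^3"
definition alg_eps :: real where "alg_eps = 1 / 10^8"
definition alg_delta :: real where "alg_delta = 3 / 10^11"

text \<open>State of Algorithm 3 after processing the first m positions of the ordering es
  (es ! (i-1) is the element e_i); opt is the value OPT known to the algorithm.\<close>
fun alg3_run :: "('a set \<Rightarrow> real) \<Rightarrow> nat \<Rightarrow> real \<Rightarrow> 'a list \<Rightarrow> nat \<Rightarrow> 'a set" where
  "alg3_run f k opt es 0 = {}"
| "alg3_run f k opt es (Suc m) =
     (let S = alg3_run f k opt es m; i = Suc m; e = es ! m; n = length es in
      if card S < k \<and>
         ((real i \<le> alg_beta * real n \<and> marg f {e} S \<ge> (1 + alg_eps) / 2 * (opt / real k)) \<or>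
          (real i > alg_beta * real n \<and> marg f {e} S \<ge> (1 - alg_delta) / 2 * (opt / real k)))
      then insert e S else S)"

definition alg3 :: "('a set \<Rightarrow> real) \<Rightarrow> nat \<Rightarrow> real \<Rightarrow> 'a list \<Rightarrow> 'a set" where
  "alg3 f k opt es = alg3_run f k opt es (length es)"

definition alg3_SL :: "('a set \<Rightarrow> real) \<Rightarrow> nat \<Rightarrow> real \<Rightarrow> 'a list \<Rightarrow> 'a set" where
  "alg3_SL f k opt es = alg3_run f k opt es (nat \<lfloor>alg_beta * real (length es)\<rfloor>)"

end

theory Submission
  imports Defs
begin

lemma floor_iff: "0 \<le> x \<Longrightarrow> (real i \<le> x) = (i \<le> nat \<lfloor>x\<rfloor>)"
  by (simp add: le_nat_iff le_floor_iff)

lemma marg_in: "e \<in> S \<Longrightarrow> marg f {e} S = 0"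
  by (simp add: marg_def insert_absorb)

lemma submod_marg:
  assumes mono: "monotone_set_fun V f" and sm: "submodular_set_fun V f"
    and AB: "A \<subseteq> B" and BV: "B \<subseteq> V" and xV: "x \<in> V"
  shows "marg f {x} B \<le> marg f {x} A"
proof (cases "x \<in> B")
  case True
  have sub: "insert x A \<subseteq> V" using AB BV xV by blast
  have "f A \<le> f (insert x A)" using mono[unfolded monotone_set_fun_def, rule_format, of A "insert x A"] sub by blast
  then show ?thesis using True by (simp add: marg_def insert_absorb)
next
  case False
  have i: "insert x A \<inter> B = A" using False AB by blast
  have u: "insert x A \<union> B = insert x B" using AB by blast
  have "f (insert x A \<union> B) + f (insert x A \<inter> B) \<le> f (insert x A) + f B"
    using sm[unfolded submodular_set_fun_def, rule_format, of "insert x A" B] AB BV xV by blast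
  then show ?thesis unfolding i u marg_def by simp
qed

lemma sum_marg:
  assumes sm: "submodular_set_fun V f" and fin: "finite A"
    and AV: "A \<subseteq> V" and SV: "S \<subseteq> V"
  shows "f (A \<union> S) \<le> f S + (\<Sum>y\<in>A. marg f {y} S)"
  using fin AV
proof (induction A rule: finite_induct)
  case empty then show ?case by simp
next
  case (insert x A)
  have i: "insert x S \<inter> (A \<union> S) = S" using insert.hyps by blast
  have u: "insert x S \<union> (A \<union> S) = insert x A \<union> S" by blast
  have "f (insert x S \<union> (A \<union> S)) + f (insert x S \<inter> (A \<union> S)) \<le> f (insert x S) + f (A \<union> S)"
    using sm[unfolded submodular_set_fun_def, rule_format, of "insert x S" "A \<union> S"] insert.prems SV by blast
  then have "f (insert x A \<union> S) \<le> f (A \<union> S) + marg f {x} S"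
    unfolding i u marg_def by simp
  then show ?case using insert by simp
qed

context
  fixes f :: "'a set \<Rightarrow> real" and k :: nat and opt :: real and es :: "'a list"
begin

lemma run_mono_step: "alg3_run f k opt es m \<subseteq> alg3_run f k opt es (Suc m)"
  by (auto simp: Let_def)

lemma run_mono: "m \<le> m' \<Longrightarrow> alg3_run f k opt es m \<subseteq> alg3_run f k opt es m'"
  using lift_Suc_mono_le[of "alg3_run f k opt es"] run_mono_step by blast

lemma run_sub: "m \<le> length es \<Longrightarrow> alg3_run f k opt es m \<subseteq> set es"
  by (induction m) (auto simp: Let_def)

lemma run_fin: "finite (alg3_run f k opt es m)"
  by (induction m) (auto simp: Let_def)

lemma run_card: "card (alg3_run f k opt es m) \<le> k"
  by (induction m) (auto simp: Let_def card_insert_if run_fin)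

lemma phase1:
  assumes pos: "opt > 0" "k > 0" and f0: "f {} = 0"
    and m: "m \<le> nat \<lfloor>alg_beta * real (length es)\<rfloor>"
  shows "f (alg3_run f k opt es m) \<ge> real (card (alg3_run f k opt es m)) * ((1 + alg_eps) / 2 * (opt / real k))"
  using m
proof (induction m)
  case 0 then show ?case using f0 by simp
next
  case (Suc m)
  let ?S = "alg3_run f k opt es m" and ?e = "es ! m"
  let ?a = "(1 + alg_eps) / 2 * (opt / real k)"
  have ge0: "0 \<le> alg_beta * real (length es)" by (simp add: alg_beta_def)
  have le: "real (Suc m) \<le> alg_beta * real (length es)"
    using floor_iff[OF ge0] Suc.prems by blast
  have IH: "f ?S \<ge> real (card ?S) * ?a" using Suc by simp
  have apos: "?a > 0" using pos by (simp add: alg_eps_def)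
  show ?case
  proof (cases "card ?S < k \<and> marg f {?e} ?S \<ge> ?a")
    case True
    have "?e \<notin> ?S" using True apos marg_in[of ?e ?S f] by force
    then have c: "card (insert ?e ?S) = Suc (card ?S)" using run_fin by simp
    have fi: "f (insert ?e ?S) = f ?S + marg f {?e} ?S" by (simp add: marg_def)
    have r: "alg3_run f k opt es (Suc m) = insert ?e ?S" using True le by (simp add: Let_def)
    have gen: "\<And>x z::real. (1 + x) * z = x * z + z" by algebra
    have "real (Suc (card ?S)) * ?a = real (card ?S) * ?a + ?a" unfolding of_nat_Suc by (rule gen)
    then show ?thesis unfolding r c fi using True IH by linarith
  next
    case False
    have r: "alg3_run f k opt es (Suc m) = ?S" using False le by (auto simp: Let_def)
    show ?thesis unfolding r using IH .
  qed
qed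

lemma phase2:
  assumes pos: "opt > 0" "k > 0"
    and m: "nat \<lfloor>alg_beta * real (length es)\<rfloor> \<le> m"
  shows "f (alg3_run f k opt es m) - f (alg3_run f k opt es (nat \<lfloor>alg_beta * real (length es)\<rfloor>))
     \<ge> (real (card (alg3_run f k opt es m)) - real (card (alg3_run f k opt es (nat \<lfloor>alg_beta * real (length es)\<rfloor>))))
        * ((1 - alg_delta) / 2 * (opt / real k))"
  using m
proof (induction m)
  case 0 then show ?case by simp
next
  case (Suc m)
  show ?case
  proof (cases "nat \<lfloor>alg_beta * real (length es)\<rfloor> = Suc m")
    case True then show ?thesis by simp
  next
    case False
    then have hm: "nat \<lfloor>alg_beta * real (length es)\<rfloor> \<le> m" using Suc.prems by simp
  let ?S = "alg3_run f k opt es m" and ?e = "es ! m"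
  let ?Sz = "alg3_run f k opt es (nat \<lfloor>alg_beta * real (length es)\<rfloor>)"
  let ?b = "(1 - alg_delta) / 2 * (opt / real k)"
  have ge0: "0 \<le> alg_beta * real (length es)" by (simp add: alg_beta_def)
  have gt: "\<not> real (Suc m) \<le> alg_beta * real (length es)"
    using floor_iff[OF ge0, of "Suc m"] hm by simp
  have IH: "f ?S - f ?Sz \<ge> (real (card ?S) - real (card ?Sz)) * ?b" using Suc.IH hm by simp
  have bpos: "?b > 0" using pos by (simp add: alg_delta_def)
  show ?thesis
  proof (cases "card ?S < k \<and> marg f {?e} ?S \<ge> ?b")
    case True
    have "?e \<notin> ?S" using True bpos marg_in[of ?e ?S f] by force
    then have c: "card (insert ?e ?S) = Suc (card ?S)" using run_fin by simp
    have fi: "f (insert ?e ?S) = f ?S + marg f {?e} ?S" by (simp add: marg_def)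
    have r: "alg3_run f k opt es (Suc m) = insert ?e ?S" using True gt by (simp add: Let_def)
    have gen: "\<And>x y z::real. (1 + x - y) * z = (x - y) * z + z" by algebra
    have "(real (Suc (card ?S)) - real (card ?Sz)) * ?b = (real (card ?S) - real (card ?Sz)) * ?b + ?b"
      unfolding of_nat_Suc by (rule gen)
    then show ?thesis unfolding r c fi using True IH by linarith
  next
    case False
    have r: "alg3_run f k opt es (Suc m) = ?S" using False gt by (auto simp: Let_def)
    show ?thesis unfolding r using IH .
  qed
qed
qed

lemma not_selected:
  assumes yy: "y \<in> set es" and no: "y \<notin> alg3_run f k opt es (length es)"
    and ck: "card (alg3_run f k opt es (length es)) < k"
    and oge: "opt \<ge> 0"
  shows "\<exists>j. j < length es \<and> marg f {y} (alg3_run f k opt es j)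
      < (if y \<in> set (take (nat \<lfloor>alg_beta * real (length es)\<rfloor>) es)
         then (1 + alg_eps) / 2 * (opt / real k) else (1 - alg_delta) / 2 * (opt / real k))"
proof -
  obtain j where j: "j < length es" "es ! j = y" using yy by (auto simp: in_set_conv_nth)
  let ?S = "alg3_run f k opt es j"
  let ?m0 = "nat \<lfloor>alg_beta * real (length es)\<rfloor>"
  let ?a = "(1 + alg_eps) / 2 * (opt / real k)"
  let ?b = "(1 - alg_delta) / 2 * (opt / real k)"
  have ge0: "0 \<le> alg_beta * real (length es)" by (simp add: alg_beta_def)
  have sj: "Suc j \<le> length es" using j by simp
  have "y \<notin> alg3_run f k opt es (Suc j)" using no run_mono[OF sj] by blast
  moreover have "card ?S < k"
    using ck card_mono[OF run_fin run_mono[of j "length es"]] j by linarith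
  ultimately have nc: "\<not> ((real (Suc j) \<le> alg_beta * real (length es) \<and> marg f {y} ?S \<ge> ?a) \<or>
          (real (Suc j) > alg_beta * real (length es) \<and> marg f {y} ?S \<ge> ?b))"
    using j by (auto simp: Let_def split: if_splits)
  have ab: "?b \<le> ?a" using oge
    by (intro mult_right_mono) (auto simp: alg_eps_def alg_delta_def)
  have "marg f {y} ?S < (if y \<in> set (take ?m0 es) then ?a else ?b)"
  proof (cases "y \<in> set (take ?m0 es)")
    case True then show ?thesis using nc ab by auto
  next
    case False
    have "\<not> j < ?m0"
    proof
      assume "j < ?m0"
      then have "es ! j \<in> set (take ?m0 es)" using j by (auto simp: in_set_conv_nth)
      then show False using False j by simp
    qed
    then have "\<not> real (Suc j) \<le> alg_beta * real (length es)"
      using floor_iff[OF ge0, of "Suc j"] by simp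
    then show ?thesis using nc False by auto
  qed
  then show ?thesis using j by blast
qed

end

lemma L1: "fSL \<ge> 100000001/200000000*c \<Longrightarrow> fSL \<ge> 3/10^3*P \<Longrightarrow> fS - fSL \<ge> 99999999997/200000000000*P - 99999999997/200000000000*c \<Longrightarrow> P > 0
 \<Longrightarrow> fS \<ge> (1/2 + 9/10^12)*(P::real)"
  by (simp add: field_simps)

lemma L2: "P \<le> fS + 100000001/200000000 * q + (99999999997/200000000000 * P - 99999999997/200000000000* q) \<Longrightarrow> q \<le> 11/10 * (1/10^3) * P \<Longrightarrow> P > 0
 \<Longrightarrow> fS \<ge> (1/2 + 9/10^12)*(P::real)"
  by (simp add: field_simps)

theorem mainTheorem8:
  fixes V :: "'a set" and f :: "'a set \<Rightarrow> real" and k :: nat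
    and Ostar :: "'a set" and es :: "'a list"
  assumes finV: "finite V"
    and nonneg: "\<forall>S. S \<subseteq> V \<longrightarrow> f S \<ge> 0"
    and mono: "monotone_set_fun V f"
    and submod: "submodular_set_fun V f"
    and norm: "f {} = 0"
    and kpos: "0 < k" and kn: "k \<le> card V"
    and OV: "Ostar \<subseteq> V" and Ocard: "card Ostar = k" and Oopt: "f Ostar = OPT_val V f k"
    and es_dist: "distinct es" and es_set: "set es = V"
    and SL: "f (alg3_SL f k (OPT_val V f k) es) \<ge> 3 / 10^3 * OPT_val V f k"
    and OL_lo: "9 / 10 * alg_beta * real k
                \<le> real (card (Ostar \<inter> set (take (nat \<lfloor>alg_beta * real (length es)\<rfloor>) es)))"
    and OL_hi: "real (card (Ostar \<inter> set (take (nat \<lfloor>alg_beta * real (length es)\<rfloor>) es)))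
                \<le> 11 / 10 * alg_beta * real k"
  shows "f (alg3 f k (OPT_val V f k) es) \<ge> (1/2 + 9 / 10^12) * OPT_val V f k"
proof -
  define opt where "opt = OPT_val V f k"
  define n where "n = length es"
  define m0 where "m0 = nat \<lfloor>alg_beta * real n\<rfloor>"
  define S where "S = alg3_run f k opt es n"
  define SL where "SL = alg3_run f k opt es m0"
  define L where "L = set (take m0 es)"
  define a where "a = (1 + alg_eps) / 2"
  define b where "b = (1 - alg_delta) / 2"
  define T where "T = opt / real k"
  have a_num: "a = 100000001/200000000" unfolding a_def alg_eps_def by simp
  have b_num: "b = 99999999997/200000000000" unfolding b_def alg_delta_def by simp
  have Sdef: "alg3 f k (OPT_val V f k) es = S" unfolding S_def alg3_def opt_def n_def ..
  have Pdef: "f Ostar = opt" using Oopt opt_def by simp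
  have SV: "S \<subseteq> V" using run_sub[where f=f and k=k and opt=opt and es=es and m=n] es_set unfolding S_def n_def by simp
  have fS0: "f S \<ge> 0" using nonneg SV by blast
  have optge: "opt \<ge> 0" using nonneg OV Pdef by auto
  have kT: "real k * T = opt" using kpos unfolding T_def by simp
  have Tge: "T \<ge> 0" using optge unfolding T_def by simp
  show ?thesis
  proof (cases "opt = 0")
    case True then show ?thesis using fS0 Sdef opt_def by simp
  next
    case False
    then have optpos: "opt > 0" using optge by simp
    have m0n: "m0 \<le> n"
    proof -
      have "alg_beta * real n \<le> real n" by (simp add: alg_beta_def)
      then have h: "\<lfloor>alg_beta * real n\<rfloor> \<le> int n" using floor_mono by fastforce
      show ?thesis unfolding m0_def using nat_mono[OF h] by simp
    qed
    have cS: "card S \<le> k" unfolding S_def by (rule run_card)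
    show ?thesis
    proof (cases "card S = k")
      case True
      have p1: "f SL \<ge> real (card SL) * (a * T)"
        using phase1[where f=f and k=k and opt=opt and es=es and m=m0, OF optpos kpos norm] unfolding SL_def m0_def n_def a_def T_def
        by (simp add: mult.assoc)
      have p2: "f S - f SL \<ge> (real (card S) - real (card SL)) * (b * T)"
        using phase2[where f=f and k=k and opt=opt and es=es and m="length es", OF optpos kpos m0n[unfolded m0_def n_def]] unfolding SL_def m0_def n_def b_def T_def S_def
        by (simp add: mult.assoc)
      have sl: "f SL \<ge> 3 / 10^3 * opt"
        using SL unfolding alg3_SL_def SL_def m0_def n_def opt_def .
      define c where "c = real (card SL) * T"
      have e1: "real (card SL) * (a * T) = a * c" unfolding c_def by simp
      have e2: "(real (card S) - real (card SL)) * (b * T) = b * opt - b * c"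
        using True kT unfolding c_def by (simp add: algebra_simps)
      have h1: "f SL \<ge> 100000001/200000000*c" using p1 unfolding e1 unfolding a_num .
      have h3: "f S - f SL \<ge> 99999999997/200000000000*opt - 99999999997/200000000000*c"
        using p2 unfolding e2 unfolding b_num .
      have "f S \<ge> (1/2 + 9 / 10^12) * opt" by (rule L1[OF h1 sl h3 optpos])
      then show ?thesis using Sdef opt_def by simp
    next
      case False
      then have ck: "card S < k" using cS by simp
      have finO: "finite Ostar" using finV OV finite_subset by blast
      have bnd: "marg f {y} S \<le> (if y \<in> L then a * T else b * T)" if oO: "y \<in> Ostar" for y
      proof (cases "y \<in> S")
        case True
        have "0 \<le> a * T" "0 \<le> b * T" using Tge by (auto simp: a_def b_def alg_eps_def alg_delta_def)
        then show ?thesis using marg_in[OF True] by simp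
      next
        case False
        have oes: "y \<in> set es" using oO OV es_set by blast
        obtain j where j: "j < length es"
          "marg f {y} (alg3_run f k opt es j) < (if y \<in> L then a * T else b * T)"
          using not_selected[OF oes False[unfolded S_def n_def] ck[unfolded S_def n_def] optge]
          unfolding L_def m0_def n_def a_def b_def T_def by (auto simp: mult.assoc)
        have "marg f {y} S \<le> marg f {y} (alg3_run f k opt es j)"
        proof -
          have jn: "alg3_run f k opt es j \<subseteq> S"
            using run_mono[where f=f and k=k and opt=opt and es=es and m=j and ?m'=n] j(1) unfolding S_def n_def by simp
          show ?thesis using submod_marg[OF mono submod jn SV] oO OV by blast
        qed
        then show ?thesis using j(2) by linarith
      qed
      have "opt \<le> f (Ostar \<union> S)"
        using mono[unfolded monotone_set_fun_def, rule_format, of Ostar "Ostar \<union> S"] OV SV Pdef by auto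
      also have "\<dots> \<le> f S + (\<Sum>y\<in>Ostar. marg f {y} S)"
        using sum_marg[OF submod finO OV SV] .
      also have "(\<Sum>y\<in>Ostar. marg f {y} S) \<le> (\<Sum>y\<in>Ostar. (if y \<in> L then a * T else b * T))"
        using bnd by (intro sum_mono) auto
      also have "(\<Sum>y\<in>Ostar. (if y \<in> L then a * T else b * T))
          = real (card (Ostar \<inter> L)) * (a * T) + real (card (Ostar - L)) * (b * T)"
        using finO by (simp add: sum.If_cases Int_def set_diff_eq)
      finally have ineq: "opt \<le> f S + real (card (Ostar \<inter> L)) * (a * T) + real (card (Ostar - L)) * (b * T)"
        by simp
      have cc: "card (Ostar \<inter> L) + card (Ostar - L) = k" using card_Int_Diff[OF finO] Ocard by metis
      define q where "q = real (card (Ostar \<inter> L)) * T"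
      have qb: "q \<le> 11 / 10 * alg_beta * opt"
      proof -
        have "real (card (Ostar \<inter> L)) * T \<le> (11 / 10 * alg_beta * real k) * T"
          using OL_hi Tge unfolding L_def m0_def n_def by (intro mult_right_mono) auto
        moreover have e: "(11 / 10 * alg_beta * real k) * T = 11 / 10 * alg_beta * (real k * T)"
          by (simp only: mult.assoc)
        ultimately show ?thesis unfolding q_def e kT by blast
      qed
      have e3: "real (card (Ostar - L)) * (b * T) = b * opt - b * q"
      proof -
        have cd: "real (card (Ostar - L)) = real k - real (card (Ostar \<inter> L))" using cc by linarith
        have "real (card (Ostar - L)) * (b * T) = b * (real k * T) - b * (real (card (Ostar \<inter> L)) * T)"
          unfolding cd by (simp add: algebra_simps)
        then show ?thesis unfolding q_def kT .
      qed
      have e4: "real (card (Ostar \<inter> L)) * (a * T) = a * q" unfolding q_def by simp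
      have h: "opt \<le> f S + 100000001/200000000 * q + (99999999997/200000000000 * opt - 99999999997/200000000000 * q)"
        using ineq unfolding e3 e4 unfolding a_num b_num .
      have qb': "q \<le> 11/10 * (1/10^3) * opt" using qb unfolding alg_beta_def .
      have "f S \<ge> (1/2 + 9 / 10^12) * opt" by (rule L2[OF h qb' optpos])
      then show ?thesis using Sdef opt_def by simp
    qed
  qed
qed

end
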